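(* Let $N$ be a natural number, $P=\{a\subseteq N: |a|\geq 2\}$, and let $\|\cdot\|_3$ be the graph coloring norm on subsets of $P$ (defined in the context). Let $E=\{e\subseteq N:|e|=2\}$ and for $A\subseteq P$ let \[\mathcal E_A=\{E'\subseteq E: (\forall e\in E')(\exists p\in A)\, e\subseteq p\ \text{ and }\ (\forall p\in A)(\exists e\in E')\, e\subseteq p\}.\] Then for every $A\subseteq P$, \[\|A\|_3=\min\{\|E'\|_3: E'\in\mathcal E_A\}.\]
   Context: $N=\{0,\ldots,N-1\}$. For $A\subseteq P$ and $z\subseteq N$ let $A\restriction z=\{a\in A: a\subseteq z\}$. The relation "$\|A\|_3\geq m$" is defined recursively: $\|A\|_3\geq 0$ always; $\|A\|_3\geq 1$ iff $A\neq\emptyset$; for $m\geq 1$, $\|A\|_3\geq m+1$ iff for every $z\subseteq N$ either $\|A\restriction z\|_3\geq m$ or $\|A\restriction(N\setminus z)\|_3\geq m$. Then $\|A\|_3$ is the largest $m$ with $\|A\|_3\geq m$. *)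

theory Defs
  imports Main
begin

text \<open>Ground set N = {0,...,N-1} is represented as {..<N}.\<close>

definition restr :: "nat set set \<Rightarrow> nat set \<Rightarrow> nat set set" where
  "restr A z = {a \<in> A. a \<subseteq> z}"

text \<open>norm3_ge N A m  means  ||A||_3 >= m.\<close>
fun norm3_ge :: "nat \<Rightarrow> nat set set \<Rightarrow> nat \<Rightarrow> bool" where
  "norm3_ge N A 0 = True"
| "norm3_ge N A (Suc 0) = (A \<noteq> {})"
| "norm3_ge N A (Suc (Suc m)) =
     (\<forall>z. z \<subseteq> {..<N} \<longrightarrow>
        norm3_ge N (restr A z) (Suc m) \<or> norm3_ge N (restr A ({..<N} - z)) (Suc m))"

definition norm3 :: "nat \<Rightarrow> nat set set \<Rightarrow> nat" where
  "norm3 N A = (GREATEST m. norm3_ge N A m)"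

definition Pset :: "nat \<Rightarrow> nat set set" where
  "Pset N = {a. a \<subseteq> {..<N} \<and> card a \<ge> 2}"

definition Eset :: "nat \<Rightarrow> nat set set" where
  "Eset N = {e. e \<subseteq> {..<N} \<and> card e = 2}"

definition calE :: "nat \<Rightarrow> nat set set \<Rightarrow> nat set set set" where
  "calE N A = {E'. E' \<subseteq> Eset N \<and> (\<forall>e\<in>E'. \<exists>p\<in>A. e \<subseteq> p) \<and> (\<forall>p\<in>A. \<exists>e\<in>E'. e \<subseteq> p)}"

end

theory Submission
  imports Defs
begin

lemma restr_empty[simp]: "restr {} z = {}"
  by (simp add: restr_def)

lemma ge_empty: "norm3_ge N {} (Suc m) = False"
proof (induction m)
  case (Suc m) then show ?case by auto
qed simp

lemma ge_Suc_mono: "norm3_ge N A (Suc m) \<Longrightarrow> norm3_ge N A m"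
proof (induction m arbitrary: A)
  case 0 then show ?case by simp
next
  case (Suc k)
  show ?case
  proof (cases k)
    case 0
    with Suc.prems have "restr A {} \<noteq> {} \<or> restr A {..<N} \<noteq> {}" by auto
    then show ?thesis using 0 by (auto simp: restr_def)
  next
    case (Suc j)
    have "\<forall>z. z \<subseteq> {..<N} \<longrightarrow> norm3_ge N (restr A z) (Suc (Suc j)) \<or> norm3_ge N (restr A ({..<N} - z)) (Suc (Suc j))"
      using Suc.prems unfolding Suc by (simp only: norm3_ge.simps)
    then have "\<forall>z. z \<subseteq> {..<N} \<longrightarrow> norm3_ge N (restr A z) (Suc j) \<or> norm3_ge N (restr A ({..<N} - z)) (Suc j)"
      using Suc.IH unfolding Suc by blast
    then show ?thesis unfolding Suc by (simp only: norm3_ge.simps)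
  qed
qed

lemma ge_le_mono: "norm3_ge N A n \<Longrightarrow> m \<le> n \<Longrightarrow> norm3_ge N A m"
proof (induction n)
  case 0 then show ?case by simp
next
  case (Suc n)
  show ?case
  proof (cases "m = Suc n")
    case True then show ?thesis using Suc.prems(1) by simp
  next
    case False
    then have "m \<le> n" using Suc.prems(2) by simp
    moreover have "norm3_ge N A n" using ge_Suc_mono Suc.prems(1) by blast
    ultimately show ?thesis using Suc.IH by blast
  qed
qed

lemma ge_bound:
  "finite W \<Longrightarrow> W \<subseteq> {..<N} \<Longrightarrow> (\<forall>a\<in>A. a \<subseteq> W \<and> card a \<ge> 2) \<Longrightarrow> norm3_ge N A (Suc m) \<Longrightarrow> m + 1 \<le> card W"
proof (induction m arbitrary: A W)
  case 0
  then obtain a where "a \<in> A" by auto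
  with 0 have "a \<subseteq> W" "card a \<ge> 2" by auto
  then have "card a \<le> card W" using 0 by (simp add: card_mono)
  with \<open>card a \<ge> 2\<close> show ?case by simp
next
  case (Suc m)
  have "A \<noteq> {}" using Suc.prems(4) ge_empty by auto
  then obtain a where "a \<in> A" by auto
  with Suc.prems have "a \<subseteq> W" "card a \<ge> 2" by auto
  moreover have "a \<noteq> {}" using \<open>card a \<ge> 2\<close> by (metis card.empty not_numeral_le_zero)
  ultimately obtain w where w: "w \<in> W" by blast
  have "norm3_ge N (restr A {w}) (Suc m) \<or> norm3_ge N (restr A ({..<N} - {w})) (Suc m)"
  proof -
    have "{w} \<subseteq> {..<N}" using w Suc.prems(2) by auto
    moreover have "\<forall>z. z \<subseteq> {..<N} \<longrightarrow> norm3_ge N (restr A z) (Suc m) \<or> norm3_ge N (restr A ({..<N} - z)) (Suc m)"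
      using Suc.prems(4) by simp
    ultimately show ?thesis by blast
  qed
  moreover have "restr A {w} = {}"
  proof -
    { fix b assume "b \<in> A" "b \<subseteq> {w}"
      then have "card b \<le> 1" by (metis card.insert card_mono card.empty finite.emptyI finite.insertI empty_iff insert_absorb One_nat_def)
      with Suc.prems \<open>b \<in> A\<close> have False by fastforce }
    then show ?thesis by (auto simp: restr_def)
  qed
  ultimately have g: "norm3_ge N (restr A ({..<N} - {w})) (Suc m)" using ge_empty by auto
  have "m + 1 \<le> card (W - {w})"
    apply (rule Suc.IH[OF _ _ _ g])
    using Suc.prems by (auto simp: restr_def)
  then show ?case using w Suc.prems(1) by (simp add: card_Diff_singleton)
qed

lemma ge_Pset_bound: "A \<subseteq> Pset N \<Longrightarrow> \<not> norm3_ge N A (Suc N)"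
  using ge_bound[of "{..<N}" N A N] by (auto simp: Pset_def)

lemma norm3_iff: "A \<subseteq> Pset N \<Longrightarrow> norm3_ge N A m \<longleftrightarrow> m \<le> norm3 N A"
proof
  assume A: "A \<subseteq> Pset N"
  have b: "\<forall>y. norm3_ge N A y \<longrightarrow> y \<le> N"
    using ge_Pset_bound[OF A] ge_le_mono by (metis not_less_eq_eq)
  { assume "norm3_ge N A m"
    then show "m \<le> norm3 N A" unfolding norm3_def using Greatest_le_nat b by blast }
  { assume "m \<le> norm3 N A"
    moreover have "norm3_ge N A (norm3 N A)" unfolding norm3_def
      by (rule GreatestI_nat[of _ 0]) (use b in auto)
    ultimately show "norm3_ge N A m" using ge_le_mono by blast }
qed

lemma ge_transfer: "(\<forall>p\<in>A. \<exists>e\<in>B. e \<subseteq> p) \<Longrightarrow> norm3_ge N A m \<Longrightarrow> norm3_ge N B m"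
proof (induction N A m arbitrary: B rule: norm3_ge.induct)
  case (1 N A) then show ?case by simp
next
  case (2 N A) then show ?case by auto
next
  case (3 N A m)
  show ?case
  proof (simp, intro allI impI)
    fix z assume z: "z \<subseteq> {..<N}"
    have h1: "\<forall>p\<in>restr A z. \<exists>e\<in>restr B z. e \<subseteq> p"
      using "3.prems"(1) by (auto simp: restr_def) (meson dual_order.trans)
    have h2: "\<forall>p\<in>restr A ({..<N} - z). \<exists>e\<in>restr B ({..<N} - z). e \<subseteq> p"
      using "3.prems"(1) unfolding restr_def by (auto) (meson dual_order.trans)
    from "3.prems"(2) z have "norm3_ge N (restr A z) (Suc m) \<or> norm3_ge N (restr A ({..<N} - z)) (Suc m)"
      by simp
    then show "norm3_ge N (restr B z) (Suc m) \<or> norm3_ge N (restr B ({..<N} - z)) (Suc m)"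
      using "3.IH"[OF z] h1 h2 by blast
  qed
qed

lemma restr_Pset: "A \<subseteq> Pset N \<Longrightarrow> restr A z \<subseteq> Pset N"
  by (auto simp: restr_def)

lemma construct:
  "A \<subseteq> Pset N \<Longrightarrow> \<not> norm3_ge N A (Suc m) \<Longrightarrow> \<exists>E'\<in>calE N A. \<not> norm3_ge N E' (Suc m)"
proof (induction m arbitrary: A)
  case 0
  then have "A = {}" by simp
  then show ?case by (auto simp: calE_def)
next
  case (Suc k)
  from Suc.prems(2) have "\<exists>z. z \<subseteq> {..<N} \<and> \<not> norm3_ge N (restr A z) (Suc k) \<and> \<not> norm3_ge N (restr A ({..<N} - z)) (Suc k)"
    by (simp only: norm3_ge.simps) blast
  then obtain z where z: "z \<subseteq> {..<N}" and n1: "\<not> norm3_ge N (restr A z) (Suc k)"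
    and n2: "\<not> norm3_ge N (restr A ({..<N} - z)) (Suc k)" by blast
  obtain E1 where E1: "E1 \<in> calE N (restr A z)" "\<not> norm3_ge N E1 (Suc k)"
    using Suc.IH[OF restr_Pset[OF Suc.prems(1)] n1] by blast
  obtain E2 where E2: "E2 \<in> calE N (restr A ({..<N} - z))" "\<not> norm3_ge N E2 (Suc k)"
    using Suc.IH[OF restr_Pset[OF Suc.prems(1)] n2] by blast
  define E3 where "E3 = {e \<in> Eset N. (\<exists>p\<in>A. e \<subseteq> p) \<and> \<not> e \<subseteq> z \<and> \<not> e \<subseteq> {..<N} - z}"
  define E' where "E' = E1 \<union> E2 \<union> E3"
  have E1z: "\<forall>e\<in>E1. e \<subseteq> z \<and> e \<in> Eset N" using E1(1) by (auto simp: calE_def restr_def)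
  have E2z: "\<forall>e\<in>E2. e \<subseteq> {..<N} - z \<and> e \<in> Eset N" using E2(1) by (auto simp: calE_def restr_def)
  have ne: "\<And>e. e \<in> Eset N \<Longrightarrow> e \<noteq> {}" by (auto simp: Eset_def)
  have E3d: "\<And>e. e \<in> E3 \<Longrightarrow> e \<in> Eset N \<and> \<not> e \<subseteq> z \<and> \<not> e \<subseteq> {..<N} - z"
    unfolding E3_def by blast
  have r1: "restr E' z = E1"
  proof (rule set_eqI)
    fix e show "e \<in> restr E' z \<longleftrightarrow> e \<in> E1"
    proof
      assume "e \<in> restr E' z"
      then have e: "e \<in> E'" "e \<subseteq> z" by (auto simp: restr_def)
      then consider "e \<in> E1" | "e \<in> E2" | "e \<in> E3" unfolding E'_def by blast
      then show "e \<in> E1"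
      proof cases
        case 2
        then have "e \<subseteq> {..<N} - z" "e \<noteq> {}" using E2z ne by auto
        with e(2) have False by blast
        then show ?thesis ..
      next
        case 3 then show ?thesis using E3d e(2) by blast
      qed
    next
      assume "e \<in> E1"
      then show "e \<in> restr E' z" using E1z unfolding restr_def E'_def by blast
    qed
  qed
  have r2: "restr E' ({..<N} - z) = E2"
  proof (rule set_eqI)
    fix e show "e \<in> restr E' ({..<N} - z) \<longleftrightarrow> e \<in> E2"
    proof
      assume "e \<in> restr E' ({..<N} - z)"
      then have e: "e \<in> E'" "e \<subseteq> {..<N} - z" by (auto simp: restr_def)
      then consider "e \<in> E1" | "e \<in> E2" | "e \<in> E3" unfolding E'_def by blast
      then show "e \<in> E2"
      proof cases
        case 1
        then have "e \<subseteq> z" "e \<noteq> {}" using E1z ne by auto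
        with e(2) have False by blast
        then show ?thesis ..
      next
        case 3 then show ?thesis using E3d e(2) by blast
      qed
    next
      assume "e \<in> E2"
      then show "e \<in> restr E' ({..<N} - z)" using E2z unfolding restr_def E'_def by blast
    qed
  qed
  have "E' \<in> calE N A"
    unfolding calE_def
  proof (intro CollectI conjI ballI)
    show "E' \<subseteq> Eset N" using E1z E2z E3d unfolding E'_def by blast
  next
    fix e assume "e \<in> E'"
    then consider "e \<in> E1" | "e \<in> E2" | "e \<in> E3" unfolding E'_def by blast
    then show "\<exists>p\<in>A. e \<subseteq> p"
    proof cases
      case 1
      then obtain p where "p \<in> restr A z" "e \<subseteq> p" using E1(1) unfolding calE_def by blast
      then show ?thesis unfolding restr_def by blast
    next
      case 2
      then obtain p where "p \<in> restr A ({..<N} - z)" "e \<subseteq> p" using E2(1) unfolding calE_def by blast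
      then show ?thesis unfolding restr_def by blast
    next
      case 3
      then show ?thesis unfolding E3_def by blast
    qed
  next
    fix p assume p: "p \<in> A"
    show "\<exists>e\<in>E'. e \<subseteq> p"
    proof (cases "p \<subseteq> z")
      case True
      have "p \<in> restr A z" using True p by (simp add: restr_def)
        moreover have "\<forall>q\<in>restr A z. \<exists>e\<in>E1. e \<subseteq> q" using E1(1) by (simp add: calE_def)
        ultimately obtain e where "e \<in> E1" "e \<subseteq> p" by blast
        then show ?thesis unfolding E'_def by blast
    next
      case nz: False
      show ?thesis
      proof (cases "p \<subseteq> {..<N} - z")
        case True
        have "p \<in> restr A ({..<N} - z)" using True p by (simp add: restr_def)
        moreover have "\<forall>q\<in>restr A ({..<N} - z). \<exists>e\<in>E2. e \<subseteq> q" using E2(1) by (simp add: calE_def)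
        ultimately obtain e where "e \<in> E2" "e \<subseteq> p" by blast
        then show ?thesis unfolding E'_def by blast
      next
        case False
        have pN: "p \<subseteq> {..<N}" using p Suc.prems(1) by (auto simp: Pset_def)
        obtain x where x: "x \<in> p" "x \<notin> z" using nz by auto
        obtain y where y: "y \<in> p" "y \<in> z" using False pN by auto
        have "x \<noteq> y" using x y by auto
        have "{x, y} \<in> E3" unfolding E3_def Eset_def using x y pN p \<open>x \<noteq> y\<close> by auto
        moreover have "{x, y} \<subseteq> p" using x y by blast
        ultimately show ?thesis unfolding E'_def by blast
      qed
    qed
  qed
  moreover have "\<not> norm3_ge N E' (Suc (Suc k))"
  proof -
    have "\<not> (norm3_ge N (restr E' z) (Suc k) \<or> norm3_ge N (restr E' ({..<N} - z)) (Suc k))"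
      using r1 r2 E1(2) E2(2) by simp
    then show ?thesis using z by (simp only: norm3_ge.simps) blast
  qed
  ultimately show ?case by blast
qed

theorem theorem5p26:
  fixes N :: nat and A :: "nat set set"
  assumes "A \<subseteq> Pset N"
  shows "norm3 N A = Min (norm3 N ` calE N A)"
proof -
  have EP: "\<And>E'. E' \<in> calE N A \<Longrightarrow> E' \<subseteq> Pset N"
    by (auto simp: calE_def Eset_def Pset_def)
  have fin: "finite (calE N A)"
  proof (rule finite_subset)
    show "calE N A \<subseteq> Pow (Pow {..<N})" by (auto simp: calE_def Eset_def)
  qed simp
  have lower: "\<And>E'. E' \<in> calE N A \<Longrightarrow> norm3 N A \<le> norm3 N E'"
  proof -
    fix E' assume E': "E' \<in> calE N A"
    have "norm3_ge N A (norm3 N A)" using norm3_iff[OF assms] by simp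
    then have "norm3_ge N E' (norm3 N A)"
      using ge_transfer E' by (auto simp: calE_def)
    then show "norm3 N A \<le> norm3 N E'" using norm3_iff[OF EP[OF E']] by simp
  qed
  have "\<not> norm3_ge N A (Suc (norm3 N A))" using norm3_iff[OF assms] by simp
  then obtain E' where E': "E' \<in> calE N A" "\<not> norm3_ge N E' (Suc (norm3 N A))"
    using construct[OF assms] by blast
  then have "norm3 N E' \<le> norm3 N A" using norm3_iff[OF EP[OF E'(1)]] by simp
  with lower[OF E'(1)] have "norm3 N A = norm3 N E'" by simp
  then have mem: "norm3 N A \<in> norm3 N ` calE N A" using E'(1) by auto
  show ?thesis
    by (rule Min_eqI[symmetric]) (use fin mem lower in auto)
qed

end
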